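(* Let $u>v\geq 1$ be integers. Then $$\langle u+v,u+v,u+v\rangle\;\leq\;\langle u,u,u\rangle+3\,\langle u,u,v\rangle+3\,\langle v,v,u\rangle .$$
   Context: Fix a field $\mathbb{K}$. For positive integers $a,b,c$, $\langle a,b,c\rangle$ denotes the minimal number of multiplications of a non-commutative bilinear algorithm computing the product of an $a\times b$ matrix $A$ by a $b\times c$ matrix $B$. Such an algorithm consists of $r$ products $t_k=\big(\sum_{i,j}\alpha^{(k)}_{ij}a_{ij}\big)\big(\sum_{j,l}\beta^{(k)}_{jl}b_{jl}\big)$ with $\alpha^{(k)}_{ij},\beta^{(k)}_{jl}\in\mathbb{K}$, together with scalars $\gamma^{(k)}_{il}\in\mathbb{K}$ such that $(AB)_{il}=\sum_{k=1}^r\gamma^{(k)}_{il}t_k$ for all $i,l$. This identity must hold when the entries of $A$ and $B$ are taken in an arbitrary, not necessarily commutative, associative $\mathbb{K}$-algebra. Equivalently, $\langle a,b,c\rangle$ is the tensor rank of the matrix multiplication tensor of format $(a,b,c)$. *)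

theory Defs
  imports Main
begin

text \<open>A bilinear algorithm with r products for multiplying an a x b matrix by a
  b x c matrix over the field 'k, in its tensor-decomposition form:
  the k-th product is (sum alpha k i j * A i j) * (sum beta k j l * B j l) and
  (AB) i l = sum_k gamma k i l * t_k.  The identity in arbitrary (noncommutative)
  associative algebras is equivalent to the following coefficient identity
  (the matrix multiplication tensor decomposition).\<close>

definition mm_algorithm ::
  "nat \<Rightarrow> nat \<Rightarrow> nat \<Rightarrow> nat \<Rightarrow>
   (nat \<Rightarrow> nat \<Rightarrow> nat \<Rightarrow> 'k::field) \<Rightarrow>
   (nat \<Rightarrow> nat \<Rightarrow> nat \<Rightarrow> 'k) \<Rightarrow>
   (nat \<Rightarrow> nat \<Rightarrow> nat \<Rightarrow> 'k) \<Rightarrow> bool" where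
  "mm_algorithm a b c r \<alpha> \<beta> \<gamma> \<longleftrightarrow>
     (\<forall>i<a. \<forall>j<b. \<forall>j'<b. \<forall>l<c. \<forall>i'<a. \<forall>l'<c.
        (\<Sum>k<r. \<alpha> k i j * \<beta> k j' l * \<gamma> k i' l') =
        (if j = j' \<and> i = i' \<and> l = l' then 1 else 0))"

definition mm_rank :: "'k::field itself \<Rightarrow> nat \<Rightarrow> nat \<Rightarrow> nat \<Rightarrow> nat" where
  "mm_rank _ a b c =
     (LEAST r. \<exists>(\<alpha>::nat \<Rightarrow> nat \<Rightarrow> nat \<Rightarrow> 'k) \<beta> \<gamma>. mm_algorithm a b c r \<alpha> \<beta> \<gamma>)"

end

theory Submission
  imports Defs
begin


definition valid_on :: "nat \<Rightarrow> nat \<Rightarrow> nat \<Rightarrow> 'i set \<Rightarrow>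
   ('i \<Rightarrow> nat \<Rightarrow> nat \<Rightarrow> 'k::field) \<Rightarrow>
   ('i \<Rightarrow> nat \<Rightarrow> nat \<Rightarrow> 'k) \<Rightarrow> ('i \<Rightarrow> nat \<Rightarrow> nat \<Rightarrow> 'k) \<Rightarrow> bool" where
  "valid_on a b c K \<alpha> \<beta> \<gamma> \<longleftrightarrow>
     (\<forall>i<a. \<forall>j<b. \<forall>j'<b. \<forall>l<c. \<forall>i'<a. \<forall>l'<c.
        (\<Sum>k\<in>K. \<alpha> k i j * \<beta> k j' l * \<gamma> k i' l') =
        (if j = j' \<and> i = i' \<and> l = l' then 1 else 0))"

lemma valid_on_alg:
  fixes \<alpha> \<beta> \<gamma> :: "'i \<Rightarrow> nat \<Rightarrow> nat \<Rightarrow> 'k::field"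
  assumes "finite K" "valid_on a b c K \<alpha> \<beta> \<gamma>"
  shows "\<exists>\<alpha>' \<beta>' \<gamma>'. mm_algorithm a b c (card K) (\<alpha>'::nat\<Rightarrow>nat\<Rightarrow>nat\<Rightarrow>'k) \<beta>' \<gamma>'"
proof -
  obtain f where f: "bij_betw f {..<card K} K"
    using ex_bij_betw_nat_finite[OF assms(1)] by (auto simp: atLeast0LessThan)
  have "mm_algorithm a b c (card K) (\<lambda>k. \<alpha> (f k)) (\<lambda>k. \<beta> (f k)) (\<lambda>k. \<gamma> (f k))"
    unfolding mm_algorithm_def
  proof (intro allI impI)
    fix i j j' l i' l'
    assume h: "i<a" "j<b" "j'<b" "l<c" "i'<a" "l'<c"
    have "(\<Sum>k<card K. \<alpha> (f k) i j * \<beta> (f k) j' l * \<gamma> (f k) i' l')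
        = (\<Sum>k\<in>K. \<alpha> k i j * \<beta> k j' l * \<gamma> k i' l')"
      by (rule sum.reindex_bij_betw[OF f])
    also have "\<dots> = (if j = j' \<and> i = i' \<and> l = l' then 1 else 0)"
      using assms(2) h unfolding valid_on_def by blast
    finally show "(\<Sum>k<card K. \<alpha> (f k) i j * \<beta> (f k) j' l * \<gamma> (f k) i' l')
        = (if j = j' \<and> i = i' \<and> l = l' then 1 else 0)" .
  qed
  then show ?thesis by blast
qed

lemma naive_valid:
  "valid_on a b c ({..<a} \<times> {..<b} \<times> {..<c})
     (\<lambda>k i j. if i = fst k \<and> j = fst (snd k) then (1::'k::field) else 0)
     (\<lambda>k j l. if j = fst (snd k) \<and> l = snd (snd k) then 1 else 0)
     (\<lambda>k i l. if i = fst k \<and> l = snd (snd k) then 1 else 0)"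
  unfolding valid_on_def
proof (intro allI impI)
  fix i j j' l i' l'
  assume h: "i<a" "j<b" "j'<b" "l<c" "i'<a" "l'<c"
  have "(\<Sum>k\<in>{..<a} \<times> {..<b} \<times> {..<c}.
      (if i = fst k \<and> j = fst (snd k) then (1::'k) else 0) *
      (if j' = fst (snd k) \<and> l = snd (snd k) then 1 else 0) *
      (if i' = fst k \<and> l' = snd (snd k) then 1 else 0))
    = (\<Sum>p<a. \<Sum>q<b. \<Sum>s<c. (if i = p \<and> j = q then (1::'k) else 0) *
          (if j' = q \<and> l = s then 1 else 0) * (if i' = p \<and> l' = s then 1 else 0))"
    by (simp add: sum.cartesian_product split_beta)
  also have "\<dots> = (if j = j' \<and> i = i' \<and> l = l' then 1 else 0)"
  proof (cases "j = j' \<and> i = i' \<and> l = l'")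
    case True
    have e: "\<And>p q s. (if i = p \<and> j = q then (1::'k) else 0) *
          (if j' = q \<and> l = s then 1 else 0) * (if i' = p \<and> l' = s then 1 else 0)
       = (if s = l then (if q = j then (if p = i then 1 else 0) else 0) else 0)"
      using True by auto
    show ?thesis unfolding e using h True by (simp add: sum.delta)
  next
    case False
    have e: "\<And>p q s. (if i = p \<and> j = q then (1::'k) else 0) *
          (if j' = q \<and> l = s then 1 else 0) * (if i' = p \<and> l' = s then 1 else 0) = 0"
      using False by auto
    show ?thesis unfolding e using False by simp
  qed
  finally show "(\<Sum>k\<in>{..<a} \<times> {..<b} \<times> {..<c}.
      (if i = fst k \<and> j = fst (snd k) then (1::'k) else 0) *
      (if j' = fst (snd k) \<and> l = snd (snd k) then 1 else 0) *
      (if i' = fst k \<and> l' = snd (snd k) then 1 else 0)) = (if j = j' \<and> i = i' \<and> l = l' then 1 else 0)" .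
qed

lemma rank_le:
  fixes \<alpha> \<beta> \<gamma> :: "'i \<Rightarrow> nat \<Rightarrow> nat \<Rightarrow> 'k::field"
  assumes "finite K" "valid_on a b c K \<alpha> \<beta> \<gamma>"
  shows "mm_rank TYPE('k) a b c \<le> card K"
  using valid_on_alg[OF assms] unfolding mm_rank_def by (auto intro: Least_le)

lemma rank_attained:
  "\<exists>\<alpha> \<beta> \<gamma>. mm_algorithm a b c (mm_rank TYPE('k::field) a b c) (\<alpha>::nat\<Rightarrow>nat\<Rightarrow>nat\<Rightarrow>'k) \<beta> \<gamma>"
proof -
  have "\<exists>r \<alpha> \<beta> \<gamma>. mm_algorithm a b c r (\<alpha>::nat\<Rightarrow>nat\<Rightarrow>nat\<Rightarrow>'k) \<beta> \<gamma>"
    using valid_on_alg[OF _ naive_valid, of a b c] by blast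
  then show ?thesis unfolding mm_rank_def by (rule LeastI_ex)
qed

lemma cyclic_alg:
  assumes "mm_algorithm a b c r \<alpha> \<beta> \<gamma>"
  shows "mm_algorithm b c a r \<beta> (\<lambda>k l i. \<gamma> k i l) (\<lambda>k j i. \<alpha> k i j)"
  unfolding mm_algorithm_def
proof (intro allI impI)
  fix j l l' i j' i'
  assume h: "j<b" "l<c" "l'<c" "i<a" "j'<b" "i'<a"
  have "(\<Sum>k<r. \<alpha> k i' j' * \<beta> k j l * \<gamma> k i l') = (if j' = j \<and> i' = i \<and> l = l' then 1 else 0)"
    using assms h unfolding mm_algorithm_def by blast
  then show "(\<Sum>k<r. \<beta> k j l * \<gamma> k i l' * \<alpha> k i' j') = (if l = l' \<and> j = j' \<and> i = i' then 1 else 0)"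
    by (simp add: mult_ac conj_ac eq_commute[of j' j] eq_commute[of i' i] cong: if_cong)
qed

lemma cyclic_rank: "mm_rank TYPE('k::field) b c a \<le> mm_rank TYPE('k) a b c"
proof -
  obtain \<alpha> \<beta> \<gamma> where "mm_algorithm a b c (mm_rank TYPE('k) a b c) (\<alpha>::nat\<Rightarrow>nat\<Rightarrow>nat\<Rightarrow>'k) \<beta> \<gamma>"
    using rank_attained by blast
  from cyclic_alg[OF this] show ?thesis
    unfolding mm_rank_def[of _ b c a] by (rule Least_le[where P="\<lambda>r. \<exists>\<alpha> \<beta> \<gamma>. mm_algorithm b c a r (\<alpha>::nat\<Rightarrow>nat\<Rightarrow>nat\<Rightarrow>'k) \<beta> \<gamma>", OF exI, OF exI, OF exI])
qed



definition sa :: "nat \<Rightarrow> nat \<Rightarrow> nat \<Rightarrow> int" where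
  "sa m x y = [[1,0,0,1],[0,0,1,1],[1,0,0,0],[0,0,0,1],[1,1,0,0],[-1,0,1,0],[0,1,0,-1]] ! m ! (2*x+y)"
definition sb :: "nat \<Rightarrow> nat \<Rightarrow> nat \<Rightarrow> int" where
  "sb m x y = [[1,0,0,1],[1,0,0,0],[0,1,0,-1],[-1,0,1,0],[0,0,0,1],[1,1,0,0],[0,0,1,1]] ! m ! (2*x+y)"
definition sc :: "nat \<Rightarrow> nat \<Rightarrow> nat \<Rightarrow> int" where
  "sc m x y = [[1,0,0,1],[0,0,1,-1],[0,1,0,1],[1,0,1,0],[-1,1,0,0],[0,0,0,1],[1,0,0,0]] ! m ! (2*x+y)"
definition pu :: "nat \<Rightarrow> bool" where "pu m = [True,False,True,False,True,False,True] ! m"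
definition qu :: "nat \<Rightarrow> bool" where "qu m = [True,True,True,False,False,True,False] ! m"
definition su :: "nat \<Rightarrow> bool" where "su m = [True,True,False,True,False,False,True] ! m"

lemma two_cases: "(x::nat) < 2 \<longleftrightarrow> x = 0 \<or> x = 1" by auto
lemma seven_cases: "(m::nat) < 7 \<longleftrightarrow> m = 0 \<or> m = 1 \<or> m = 2 \<or> m = 3 \<or> m = 4 \<or> m = 5 \<or> m = 6" by auto

lemma strassen:
  assumes "x < 2" "y < 2" "y' < 2" "z < 2" "x' < 2" "z' < 2"
  shows "(\<Sum>m<7. sa m x y * sb m y' z * sc m x' z') = (if y = y' \<and> x = x' \<and> z = z' then 1 else 0)"
  using assms unfolding two_cases
  by (auto simp: sa_def sb_def sc_def eval_nat_numeral)

lemma guard: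
  assumes "m < 7" "x < 2" "y < 2" "y' < 2" "z < 2" "x' < 2" "z' < 2"
    "sa m x y * sb m y' z * sc m x' z' \<noteq> 0"
  shows "(pu m \<or> x = 1 \<or> x' = 1) \<and> (qu m \<or> y = 1 \<or> y' = 1) \<and> (su m \<or> z = 1 \<or> z' = 1)"
  using assms unfolding two_cases seven_cases
  by (auto simp: sa_def sb_def sc_def pu_def qu_def su_def)



definition gd :: "(nat \<Rightarrow> nat \<Rightarrow> nat \<Rightarrow> 'k::field) \<Rightarrow> nat \<Rightarrow> nat \<Rightarrow> nat \<Rightarrow> nat \<Rightarrow> nat \<Rightarrow> 'k" where
  "gd f p q k x y = (if x < p \<and> y < q then f k x y else 0)"

lemma guarded_sum:
  assumes "mm_algorithm p q s r \<alpha> \<beta> \<gamma>"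
  shows "(\<Sum>k<r. gd \<alpha> p q k i j * gd \<beta> q s k j' l * gd \<gamma> p s k i' l') =
    (if i<p \<and> j<q \<and> j'<q \<and> l<s \<and> i'<p \<and> l'<s \<and> j=j' \<and> i=i' \<and> l=l' then 1 else 0)"
proof (cases "i<p \<and> j<q \<and> j'<q \<and> l<s \<and> i'<p \<and> l'<s")
  case True
  then show ?thesis using assms unfolding mm_algorithm_def gd_def by auto
next
  case False
  then show ?thesis unfolding gd_def by auto
qed

lemma main_le:
  fixes u v :: nat
  assumes "u > v"
  shows "mm_rank TYPE('k::field) (u+v) (u+v) (u+v) \<le>
    (\<Sum>m<7. mm_rank TYPE('k) (if pu m then u else v) (if qu m then u else v) (if su m then u else v))"
proof -
  define P where "P m = (if pu m then u else v)" for m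
  define Q where "Q m = (if qu m then u else v)" for m
  define S where "S m = (if su m then u else v)" for m
  define rk where "rk m = mm_rank TYPE('k) (P m) (Q m) (S m)" for m
  have "\<forall>m. \<exists>\<alpha> \<beta> \<gamma>. mm_algorithm (P m) (Q m) (S m) (rk m) (\<alpha>::nat\<Rightarrow>nat\<Rightarrow>nat\<Rightarrow>'k) \<beta> \<gamma>"
    unfolding rk_def using rank_attained by blast
  then obtain al be ga where alg: "\<And>m. mm_algorithm (P m) (Q m) (S m) (rk m) (al m) (be m) (ga m :: nat\<Rightarrow>nat\<Rightarrow>nat\<Rightarrow>'k)"
    by metis
  define blk where "blk i = (if i < u then 0 else 1::nat)" for i
  define off where "off i = (if i < u then i else i - u)" for i
  define sz where "sz x = (if x = 0 then u else v)" for x :: nat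
  define K where "K = (SIGMA m:{..<7::nat}. {..<rk m})"
  define A where "A p i j = of_int (sa (fst p) (blk i) (blk j)) * gd (al (fst p)) (P (fst p)) (Q (fst p)) (snd p) (off i) (off j)" for p i j
  define B where "B p j l = of_int (sb (fst p) (blk j) (blk l)) * gd (be (fst p)) (Q (fst p)) (S (fst p)) (snd p) (off j) (off l)" for p j l
  define C where "C p i l = of_int (sc (fst p) (blk i) (blk l)) * gd (ga (fst p)) (P (fst p)) (S (fst p)) (snd p) (off i) (off l)" for p i l
  have finK: "finite K" unfolding K_def by auto
  have bk: "blk i < 2" "off i < sz (blk i)" if "i < u + v" for i
    using that unfolding blk_def off_def sz_def by auto
  have beq: "i = i' \<longleftrightarrow> blk i = blk i' \<and> off i = off i'" if "i < u+v" "i' < u+v" for i i'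
    using that unfolding blk_def off_def by auto
  have Pge: "v \<le> P m" "v \<le> Q m" "v \<le> S m" for m
    using assms unfolding P_def Q_def S_def by auto
  have szle: "sz x \<le> u" for x using assms unfolding sz_def by auto
  have key: "a < (if b then u else v)" if "a < sz x" "a < sz x'" "b \<or> x = 1 \<or> x' = 1" for a x x' b
    using that assms unfolding sz_def by (auto split: if_splits)
  have valid: "valid_on (u+v) (u+v) (u+v) K A B C"
    unfolding valid_on_def
  proof (intro allI impI)
    fix i j j' l i' l'
    assume h: "i<u+v" "j<u+v" "j'<u+v" "l<u+v" "i'<u+v" "l'<u+v"
    define E where "E = (off j = off j' \<and> off i = off i' \<and> off l = off l')"
    define co where "co m = sa m (blk i) (blk j) * sb m (blk j') (blk l) * sc m (blk i') (blk l')" for m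
    have "(\<Sum>p\<in>K. A p i j * B p j' l * C p i' l') =
       (\<Sum>m<7. \<Sum>k<rk m. A (m,k) i j * B (m,k) j' l * C (m,k) i' l')"
      unfolding K_def by (subst sum.Sigma) auto
    also have "\<dots> = (\<Sum>m<7. of_int (co m) * (\<Sum>k<rk m.
        gd (al m) (P m) (Q m) k (off i) (off j) * gd (be m) (Q m) (S m) k (off j') (off l)
        * gd (ga m) (P m) (S m) k (off i') (off l')))"
      unfolding A_def B_def C_def co_def
      by (simp add: sum_distrib_left mult_ac)
    also have "\<dots> = (\<Sum>m<7. of_int (co m) * (if off i < P m \<and> off j < Q m \<and> off j' < Q m \<and> off l < S m
        \<and> off i' < P m \<and> off l' < S m \<and> E then 1 else 0))"
      unfolding guarded_sum[OF alg] E_def by (simp add: conj_ac)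
    also have "\<dots> = (if j = j' \<and> i = i' \<and> l = l' then 1 else 0)"
    proof (cases E)
      case False
      then have "\<not> (j = j' \<and> i = i' \<and> l = l')" unfolding E_def by auto
      then show ?thesis using False by simp
    next
      case True
      have "(\<Sum>m<7. of_int (co m) * (if off i < P m \<and> off j < Q m \<and> off j' < Q m \<and> off l < S m
        \<and> off i' < P m \<and> off l' < S m \<and> E then 1 else 0)) = (\<Sum>m<7. (of_int (co m) :: 'k))"
      proof (rule sum.cong[OF refl])
        fix m assume m: "m \<in> {..<7::nat}"
        show "of_int (co m) * (if off i < P m \<and> off j < Q m \<and> off j' < Q m \<and> off l < S m
        \<and> off i' < P m \<and> off l' < S m \<and> E then 1 else 0) = (of_int (co m) :: 'k)"
        proof (cases "co m = 0")
          case True then show ?thesis by simp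
        next
          case False
          have g: "(pu m \<or> blk i = 1 \<or> blk i' = 1) \<and> (qu m \<or> blk j = 1 \<or> blk j' = 1) \<and> (su m \<or> blk l = 1 \<or> blk l' = 1)"
            using guard[of m "blk i" "blk j" "blk j'" "blk l" "blk i'" "blk l'"] m False bk h
            unfolding co_def by auto
          have s1: "sz 1 = v" unfolding sz_def by simp
          have r1: "off i < P m"
            unfolding P_def by (rule key[of _ "blk i" "blk i'"]) (use g bk[OF h(1)] bk[OF h(5)] True in \<open>auto simp: E_def\<close>)
          have r2: "off j < Q m"
            unfolding Q_def by (rule key[of _ "blk j" "blk j'"]) (use g bk[OF h(2)] bk[OF h(3)] True in \<open>auto simp: E_def\<close>)
          have r3: "off l < S m"
            unfolding S_def by (rule key[of _ "blk l" "blk l'"]) (use g bk[OF h(4)] bk[OF h(6)] True in \<open>auto simp: E_def\<close>)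
          show ?thesis using r1 r2 r3 True unfolding E_def by auto
        qed
      qed
      also have "\<dots> = of_int (\<Sum>m<7. co m)" by simp
      also have "\<dots> = of_int (if blk j = blk j' \<and> blk i = blk i' \<and> blk l = blk l' then 1 else 0)"
        unfolding co_def using strassen bk h by simp
      also have "\<dots> = (if j = j' \<and> i = i' \<and> l = l' then 1 else 0)"
        using beq h True unfolding E_def by auto
      finally show ?thesis .
    qed
    finally show "(\<Sum>p\<in>K. A p i j * B p j' l * C p i' l') = (if j = j' \<and> i = i' \<and> l = l' then 1 else 0)" .
  qed
  have "mm_rank TYPE('k) (u+v) (u+v) (u+v) \<le> card K"
    by (rule rank_le[OF finK valid])
  also have "card K = (\<Sum>m<7. rk m)" unfolding K_def by simp
  finally show ?thesis unfolding rk_def P_def Q_def S_def .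
qed


theorem proposition1:
  fixes u v :: nat
  assumes "u > v" and "v \<ge> 1"
  shows "mm_rank TYPE('k::field) (u+v) (u+v) (u+v)
           \<le> mm_rank TYPE('k) u u u + 3 * mm_rank TYPE('k) u u v
              + 3 * mm_rank TYPE('k) v v u"
proof -
  have s: "(\<Sum>m<7. mm_rank TYPE('k) (if pu m then u else v) (if qu m then u else v) (if su m then u else v))
     = mm_rank TYPE('k) u u u + mm_rank TYPE('k) v u u + mm_rank TYPE('k) u u v
       + mm_rank TYPE('k) v v u + mm_rank TYPE('k) u v v + mm_rank TYPE('k) v u v
       + mm_rank TYPE('k) u v u"
    by (simp add: eval_nat_numeral pu_def qu_def su_def)
  have c1: "mm_rank TYPE('k) u v u \<le> mm_rank TYPE('k) u u v" by (rule cyclic_rank)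
  have c2: "mm_rank TYPE('k) v u u \<le> mm_rank TYPE('k) u v u" by (rule cyclic_rank)
  have c3: "mm_rank TYPE('k) v u v \<le> mm_rank TYPE('k) v v u" by (rule cyclic_rank)
  have c4: "mm_rank TYPE('k) u v v \<le> mm_rank TYPE('k) v u v" by (rule cyclic_rank)
  show ?thesis using main_le[OF assms(1), where 'k='k] s c1 c2 c3 c4 by linarith
qed

end
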